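(* Let $Z\in\mathbb{R}^{p_z}$ and $U\in\mathbb{R}$ be random, let $(U^\dagger,Z^\dagger)$ be an independent copy of $(U,Z)$, and let $\nu$ be a measure on $\mathbb{R}^{p_z}$ that is symmetric about the origin. Define $K(z):=\int_{\mathbb{R}^{p_z}}(1-\cos(z's))\,\nu(ds)$. Suppose $\mathbb{E}U^2<\infty$ and either (i) $\nu$ is a finite (integrable) measure; or (ii) for some $\alpha\in(0,2]$, $\int_{\mathbb{R}^{p_z}}(1\wedge\|s\|^{\alpha})\,\nu(ds)<\infty$ and $\mathbb{E}|U|^2+\mathbb{E}\|Z\|^{2\alpha}<\infty$. Then $$T(U|Z;\nu)=-\mathbb{E}\big[(U-\mathbb{E}U)(U^\dagger-\mathbb{E}U)K(Z-Z^\dagger)\big],$$ where $T(U|Z;\nu):=\int_{\mathbb{R}^{p_z}}\big|\mathbb{E}[(U-\mathbb{E}U)\exp(\mathrm{i}Z's)]\big|^2\nu(ds)$.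
   Context: $\mathrm{i}$ is the imaginary unit; $a\wedge b=\min(a,b)$. *)

theory Defs
  imports "HOL-Probability.Probability"
begin

definition Kfun :: "'a::euclidean_space measure \<Rightarrow> 'a \<Rightarrow> real" where
  "Kfun \<nu> z = (\<integral>s. (1 - cos (z \<bullet> s)) \<partial>\<nu>)"

definition Tstat :: "'w measure \<Rightarrow> ('w \<Rightarrow> real) \<Rightarrow> ('w \<Rightarrow> 'a::euclidean_space)
    \<Rightarrow> 'a measure \<Rightarrow> real" where
  "Tstat M U Z \<nu> =
     (\<integral>s. (cmod (\<integral>\<omega>. complex_of_real (U \<omega> - (\<integral>\<omega>'. U \<omega>' \<partial>M))
                          * exp (\<i> * complex_of_real (Z \<omega> \<bullet> s)) \<partial>M))\<^sup>2 \<partial>\<nu>)"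

definition symmetric_measure :: "'a::euclidean_space measure \<Rightarrow> bool" where
  "symmetric_measure \<nu> \<longleftrightarrow>
     sets \<nu> = sets borel \<and> (\<forall>A\<in>sets borel. emeasure \<nu> (uminus ` A) = emeasure \<nu> A)"

end

theory Submission imports Defs begin

lemma one_minus_cos_le: "1 - cos (t::real) \<le> t\<^sup>2 / 2"
proof -
  have "cos t = 1 - 2 * (sin (t/2))\<^sup>2"
    using cos_double[of "t/2"] by (simp add: cos_squared_eq)
  moreover have "(sin (t/2))\<^sup>2 \<le> (t/2)\<^sup>2"
    using abs_sin_x_le_abs_x[of "t/2"] by (metis abs_ge_zero power2_abs power_mono)
  ultimately show ?thesis by (simp add: power_divide)
qed

lemma cos_bound_alpha:
  fixes t :: real and \<alpha> :: real
  assumes "0 < \<alpha>" "\<alpha> \<le> 2"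
  shows "\<bar>1 - cos t\<bar> \<le> 2 * min 1 (\<bar>t\<bar> powr \<alpha>)"
proof (cases "\<bar>t\<bar> \<ge> 1")
  case True
  then have "1 \<le> \<bar>t\<bar> powr \<alpha>" using assms by (simp add: ge_one_powr_ge_zero)
  then show ?thesis using cos_le_one[of t] cos_ge_minus_one[of t] by simp
next
  case False
  have "\<bar>t\<bar> powr 2 \<le> \<bar>t\<bar> powr \<alpha>"
    using False assms by (intro powr_mono') auto
  then have "t\<^sup>2 \<le> \<bar>t\<bar> powr \<alpha>" by (simp add: powr_numeral)
  moreover have "\<bar>t\<bar> powr \<alpha> \<le> 1" using False assms by (intro powr_le1) auto
  ultimately have "1 - cos t \<le> \<bar>t\<bar> powr \<alpha>" using one_minus_cos_le[of t] powr_ge_zero[of "\<bar>t\<bar>" \<alpha>] by linarith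
  moreover have "0 \<le> 1 - cos t" using cos_le_one[of t] by linarith
  moreover have "0 \<le> \<bar>t\<bar> powr \<alpha>" by simp
  ultimately show ?thesis using cos_ge_minus_one[of t] unfolding min_def by (smt (verit))
qed

lemma min_max_powr_bound:
  fixes a b :: real assumes "0 \<le> a" "0 \<le> b"
  shows "min 1 (a * b) \<le> max 1 a * min 1 b"
proof (cases "b \<ge> 1")
  case True
  then have "min 1 b = 1" by simp
  moreover have "min 1 (a * b) \<le> 1" by simp
  moreover have "1 \<le> max 1 a" by simp
  ultimately show ?thesis by linarith
next
  case False
  have "a * b \<le> max 1 a * b" using assms by (intro mult_right_mono) auto
  then show ?thesis using False assms by (simp add: min_def)
qed

lemma cos_inner_bound:
  fixes x s :: "'a::euclidean_space" and \<alpha> :: real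
  assumes "0 < \<alpha>" "\<alpha> \<le> 2"
  shows "\<bar>1 - cos (x \<bullet> s)\<bar> \<le> 2 * max 1 (norm x powr \<alpha>) * min 1 (norm s powr \<alpha>)"
proof -
  have "\<bar>x \<bullet> s\<bar> \<le> norm x * norm s" by (rule Cauchy_Schwarz_ineq2)
  then have "\<bar>x \<bullet> s\<bar> powr \<alpha> \<le> (norm x * norm s) powr \<alpha>"
    using assms by (intro powr_mono2) auto
  also have "\<dots> = norm x powr \<alpha> * norm s powr \<alpha>" by (simp add: powr_mult)
  finally have "min 1 (\<bar>x \<bullet> s\<bar> powr \<alpha>) \<le> min 1 (norm x powr \<alpha> * norm s powr \<alpha>)" by simp
  also have "\<dots> \<le> max 1 (norm x powr \<alpha>) * min 1 (norm s powr \<alpha>)"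
    by (intro min_max_powr_bound) auto
  finally show ?thesis using cos_bound_alpha[OF assms, of "x \<bullet> s"] by simp
qed

lemma integrable_prod_bound:
  fixes f :: "'a \<times> 'b \<Rightarrow> real"
  assumes "pair_sigma_finite N M" and f[measurable]: "f \<in> borel_measurable (N \<Otimes>\<^sub>M M)"
   and bnd: "\<And>s \<omega>. \<bar>f (s,\<omega>)\<bar> \<le> B \<omega> * w s" and w0: "\<And>s. 0 \<le> w s" and B0: "\<And>\<omega>. 0 \<le> B \<omega>"
   and [measurable]: "w \<in> borel_measurable N" "B \<in> borel_measurable M"
   and wfin: "(\<integral>\<^sup>+s. ennreal (w s) \<partial>N) < \<infinity>" and Bint: "integrable M B"
  shows "integrable (N \<Otimes>\<^sub>M M) f"
proof -
  interpret pair_sigma_finite N M by fact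
  have "(\<integral>\<^sup>+x. ennreal (norm (f x)) \<partial>(N \<Otimes>\<^sub>M M)) = (\<integral>\<^sup>+\<omega>. \<integral>\<^sup>+s. ennreal (norm (f (s,\<omega>))) \<partial>N \<partial>M)"
    by (rule nn_integral_snd[symmetric]) measurable
  also have "\<dots> \<le> (\<integral>\<^sup>+\<omega>. \<integral>\<^sup>+s. ennreal (B \<omega>) * ennreal (w s) \<partial>N \<partial>M)"
    using bnd B0 w0 by (intro nn_integral_mono) (simp add: ennreal_mult[symmetric])
  also have "\<dots> = (\<integral>\<^sup>+\<omega>. ennreal (B \<omega>) * (\<integral>\<^sup>+s. ennreal (w s) \<partial>N) \<partial>M)"
    by (simp add: nn_integral_cmult)
  also have "\<dots> = (\<integral>\<^sup>+\<omega>. ennreal (B \<omega>) \<partial>M) * (\<integral>\<^sup>+s. ennreal (w s) \<partial>N)"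
    by (simp add: nn_integral_multc)
  also have "\<dots> < \<infinity>"
  proof -
    have "(\<integral>\<^sup>+\<omega>. ennreal (norm (B \<omega>)) \<partial>M) < \<infinity>" using Bint by (simp add: integrable_iff_bounded)
    then have "(\<integral>\<^sup>+\<omega>. ennreal (B \<omega>) \<partial>M) < \<infinity>" using B0 by simp
    then show ?thesis using wfin by (simp add: ennreal_mult_less_top)
  qed
  finally show ?thesis by (simp add: integrable_iff_bounded)
qed

lemma powr_sum_bound:
  fixes a b \<alpha> :: real
  assumes "0 \<le> a" "0 \<le> b" "0 < \<alpha>" "\<alpha> \<le> 2"
  shows "(a + b) powr \<alpha> \<le> 4 * (a powr \<alpha> + b powr \<alpha>)"
proof -
  have "(a + b) powr \<alpha> \<le> (2 * max a b) powr \<alpha>"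
    using assms by (intro powr_mono2) auto
  also have "\<dots> = 2 powr \<alpha> * max a b powr \<alpha>" using assms by (simp add: powr_mult)
  also have "\<dots> \<le> 4 * (a powr \<alpha> + b powr \<alpha>)"
  proof (intro mult_mono)
    have "2 powr \<alpha> \<le> (2::real) powr 2" using assms by (intro powr_mono) auto
    then show "2 powr \<alpha> \<le> (4::real)" by simp
    show "max a b powr \<alpha> \<le> a powr \<alpha> + b powr \<alpha>"
      by (cases "a \<le> b") (auto simp: max_def)
  qed auto
  finally show ?thesis .
qed

theorem theorem1:
  fixes M :: "'w measure"
    and U U' :: "'w \<Rightarrow> real"
    and Z Z' :: "'w \<Rightarrow> 'a::euclidean_space"
    and \<nu> :: "'a measure"
  assumes M: "prob_space M"
    and U_meas: "U \<in> borel_measurable M" and U'_meas: "U' \<in> borel_measurable M"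
    and Z_meas: "Z \<in> borel_measurable M" and Z'_meas: "Z' \<in> borel_measurable M"
    and indep: "prob_space.indep_var M borel (\<lambda>\<omega>. (U \<omega>, Z \<omega>)) borel (\<lambda>\<omega>. (U' \<omega>, Z' \<omega>))"
    and same_dist: "distr M borel (\<lambda>\<omega>. (U' \<omega>, Z' \<omega>)) = distr M borel (\<lambda>\<omega>. (U \<omega>, Z \<omega>))"
    and sym: "symmetric_measure \<nu>"
    and U2: "integrable M (\<lambda>\<omega>. (U \<omega>)\<^sup>2)"
    and cases: "finite_measure \<nu> \<or>
      (\<exists>\<alpha>::real. 0 < \<alpha> \<and> \<alpha> \<le> 2 \<and>
         (\<integral>\<^sup>+ s. ennreal (min 1 (norm s powr \<alpha>)) \<partial>\<nu>) < \<infinity> \<and>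
         integrable M (\<lambda>\<omega>. (U \<omega>)\<^sup>2) \<and>
         integrable M (\<lambda>\<omega>. norm (Z \<omega>) powr (2 * \<alpha>)))"
  shows "Tstat M U Z \<nu> =
    - (\<integral>\<omega>. (U \<omega> - (\<integral>x. U x \<partial>M)) * (U' \<omega> - (\<integral>x. U x \<partial>M))
             * Kfun \<nu> (Z \<omega> - Z' \<omega>) \<partial>M)"
  proof -
  interpret P: prob_space M by (rule M)
  note [measurable] = U_meas U'_meas Z_meas Z'_meas
  have nu_sets: "sets \<nu> = sets borel" using sym by (simp add: symmetric_measure_def)
  define m where "m = (\<integral>x. U x \<partial>M)"
  have UZ_meas[measurable]: "(\<lambda>\<omega>. (U \<omega>, Z \<omega>)) \<in> borel_measurable M" by measurable
  have UZ'_meas[measurable]: "(\<lambda>\<omega>. (U' \<omega>, Z' \<omega>)) \<in> borel_measurable M" by measurable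
  have dist: "(\<integral>\<omega>. g (U' \<omega>, Z' \<omega>) \<partial>M) = (\<integral>\<omega>. g (U \<omega>, Z \<omega>) \<partial>M)"
    if [measurable]: "g \<in> borel_measurable borel" for g :: "real \<times> 'a \<Rightarrow> real"
    using integral_distr[OF UZ'_meas that] integral_distr[OF UZ_meas that] same_dist by simp
  have distI: "integrable M (\<lambda>\<omega>. g (U' \<omega>, Z' \<omega>)) \<longleftrightarrow> integrable M (\<lambda>\<omega>. g (U \<omega>, Z \<omega>))"
    if [measurable]: "g \<in> borel_measurable borel" for g :: "real \<times> 'a \<Rightarrow> real"
    using integrable_distr_eq[OF UZ'_meas that] integrable_distr_eq[OF UZ_meas that] same_dist by simp
  have indepE: "integrable M (\<lambda>\<omega>. f (U \<omega>, Z \<omega>) * g (U' \<omega>, Z' \<omega>)) \<and>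
      (\<integral>\<omega>. f (U \<omega>, Z \<omega>) * g (U' \<omega>, Z' \<omega>) \<partial>M) = (\<integral>\<omega>. f (U \<omega>, Z \<omega>) \<partial>M) * (\<integral>\<omega>. g (U' \<omega>, Z' \<omega>) \<partial>M)"
    if [measurable]: "f \<in> borel_measurable borel" "g \<in> borel_measurable borel"
      and "integrable M (\<lambda>\<omega>. f (U \<omega>, Z \<omega>))" "integrable M (\<lambda>\<omega>. g (U' \<omega>, Z' \<omega>))"
    for f g :: "real \<times> 'a \<Rightarrow> real"
  proof -
    have "P.indep_var borel (\<lambda>\<omega>. f (U \<omega>, Z \<omega>)) borel (\<lambda>\<omega>. g (U' \<omega>, Z' \<omega>))"
      using P.indep_var_compose[OF indep, of f borel g borel] by (simp add: comp_def)
    then show ?thesis using that P.indep_var_lebesgue_integral P.indep_var_integrable by blast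
  qed
  have UI: "integrable M U" by (rule P.square_integrable_imp_integrable[OF U_meas U2])
  define vf where "vf = (\<lambda>p::real\<times>'a. fst p - m)"
  have vf_meas[measurable]: "vf \<in> borel_measurable borel" unfolding vf_def by (intro borel_measurable_continuous_onI continuous_intros)
  have VI: "integrable M (\<lambda>\<omega>. vf (U \<omega>, Z \<omega>))" using UI by (simp add: vf_def)
  have V'I: "integrable M (\<lambda>\<omega>. vf (U' \<omega>, Z' \<omega>))" using VI distI[OF vf_meas] by simp
  have V0: "(\<integral>\<omega>. vf (U \<omega>, Z \<omega>) \<partial>M) = 0" using UI by (simp add: vf_def m_def P.prob_space)
  have V'0: "(\<integral>\<omega>. vf (U' \<omega>, Z' \<omega>) \<partial>M) = 0" using V0 dist[OF vf_meas] by simp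
  have VV: "integrable M (\<lambda>\<omega>. vf (U \<omega>, Z \<omega>) * vf (U' \<omega>, Z' \<omega>))"
      "(\<integral>\<omega>. vf (U \<omega>, Z \<omega>) * vf (U' \<omega>, Z' \<omega>) \<partial>M) = 0"
    using indepE[OF vf_meas vf_meas VI V'I] V0 by auto
  have Tpt: "(cmod (\<integral>\<omega>. complex_of_real (U \<omega> - m) * exp (\<i> * complex_of_real (Z \<omega> \<bullet> s)) \<partial>M))\<^sup>2
     = - (\<integral>\<omega>. (U \<omega> - m) * (U' \<omega> - m) * (1 - cos ((Z \<omega> - Z' \<omega>) \<bullet> s)) \<partial>M)" for s
  proof -
    define cf where "cf = (\<lambda>p::real\<times>'a. (fst p - m) * cos (snd p \<bullet> s))"
    define sf where "sf = (\<lambda>p::real\<times>'a. (fst p - m) * sin (snd p \<bullet> s))"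
    have cf_meas[measurable]: "cf \<in> borel_measurable borel" unfolding cf_def by (intro borel_measurable_continuous_onI continuous_intros)
    have sf_meas[measurable]: "sf \<in> borel_measurable borel" unfolding sf_def by (intro borel_measurable_continuous_onI continuous_intros)
    have cfI: "integrable M (\<lambda>\<omega>. cf (U \<omega>, Z \<omega>))"
      by (rule Bochner_Integration.integrable_bound[OF VI]) (auto simp: cf_def vf_def abs_mult intro!: mult_left_le)
    have sfI: "integrable M (\<lambda>\<omega>. sf (U \<omega>, Z \<omega>))"
      by (rule Bochner_Integration.integrable_bound[OF VI]) (auto simp: sf_def vf_def abs_mult intro!: mult_left_le)
    have cf'I: "integrable M (\<lambda>\<omega>. cf (U' \<omega>, Z' \<omega>))" using cfI distI[OF cf_meas] by simp
    have sf'I: "integrable M (\<lambda>\<omega>. sf (U' \<omega>, Z' \<omega>))" using sfI distI[OF sf_meas] by simp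
    define Cf where "Cf = (\<lambda>\<omega>. complex_of_real (U \<omega> - m) * exp (\<i> * complex_of_real (Z \<omega> \<bullet> s)))"
    have CI: "integrable M Cf"
      by (rule Bochner_Integration.integrable_bound[OF VI]) (auto simp: Cf_def vf_def norm_mult)
    have ReI: "Re (integral\<^sup>L M Cf) = (\<integral>\<omega>. cf (U \<omega>, Z \<omega>) \<partial>M)"
      using integral_Re[OF CI] by (simp add: Cf_def cf_def Re_exp)
    have ImI: "Im (integral\<^sup>L M Cf) = (\<integral>\<omega>. sf (U \<omega>, Z \<omega>) \<partial>M)"
      using integral_Im[OF CI] by (simp add: Cf_def sf_def Im_exp)
    have c2: "(\<integral>\<omega>. cf (U \<omega>, Z \<omega>) \<partial>M)\<^sup>2 = (\<integral>\<omega>. cf (U \<omega>, Z \<omega>) * cf (U' \<omega>, Z' \<omega>) \<partial>M)"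
      using indepE[OF cf_meas cf_meas cfI cf'I] dist[OF cf_meas] by (simp add: power2_eq_square)
    have s2: "(\<integral>\<omega>. sf (U \<omega>, Z \<omega>) \<partial>M)\<^sup>2 = (\<integral>\<omega>. sf (U \<omega>, Z \<omega>) * sf (U' \<omega>, Z' \<omega>) \<partial>M)"
      using indepE[OF sf_meas sf_meas sfI sf'I] dist[OF sf_meas] by (simp add: power2_eq_square)
    have ccI: "integrable M (\<lambda>\<omega>. cf (U \<omega>, Z \<omega>) * cf (U' \<omega>, Z' \<omega>))"
      using indepE[OF cf_meas cf_meas cfI cf'I] by simp
    have ssI: "integrable M (\<lambda>\<omega>. sf (U \<omega>, Z \<omega>) * sf (U' \<omega>, Z' \<omega>))"
      using indepE[OF sf_meas sf_meas sfI sf'I] by simp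
    have eq: "cf (U \<omega>, Z \<omega>) * cf (U' \<omega>, Z' \<omega>) + sf (U \<omega>, Z \<omega>) * sf (U' \<omega>, Z' \<omega>)
        = vf (U \<omega>, Z \<omega>) * vf (U' \<omega>, Z' \<omega>) - (U \<omega> - m) * (U' \<omega> - m) * (1 - cos ((Z \<omega> - Z' \<omega>) \<bullet> s))" for \<omega>
      by (simp add: cf_def sf_def vf_def inner_diff_left cos_diff algebra_simps)
    have "(cmod (integral\<^sup>L M Cf))\<^sup>2 = (\<integral>\<omega>. cf (U \<omega>, Z \<omega>) * cf (U' \<omega>, Z' \<omega>) + sf (U \<omega>, Z \<omega>) * sf (U' \<omega>, Z' \<omega>) \<partial>M)"
      using ccI ssI by (simp add: cmod_power2 ReI ImI c2 s2)
    also have "\<dots> = (\<integral>\<omega>. vf (U \<omega>, Z \<omega>) * vf (U' \<omega>, Z' \<omega>) - (U \<omega> - m) * (U' \<omega> - m) * (1 - cos ((Z \<omega> - Z' \<omega>) \<bullet> s)) \<partial>M)"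
      by (simp only: eq)
    also have "\<dots> = - (\<integral>\<omega>. (U \<omega> - m) * (U' \<omega> - m) * (1 - cos ((Z \<omega> - Z' \<omega>) \<bullet> s)) \<partial>M)"
    proof -
      have hI: "integrable M (\<lambda>\<omega>. (U \<omega> - m) * (U' \<omega> - m) * (1 - cos ((Z \<omega> - Z' \<omega>) \<bullet> s)))"
      proof -
        have "integrable M (\<lambda>\<omega>. vf (U \<omega>, Z \<omega>) * vf (U' \<omega>, Z' \<omega>) - (cf (U \<omega>, Z \<omega>) * cf (U' \<omega>, Z' \<omega>) + sf (U \<omega>, Z \<omega>) * sf (U' \<omega>, Z' \<omega>)))"
          using VV ccI ssI by auto
        then show ?thesis by (simp add: eq)
      qed
      show ?thesis using VV hI by simp
    qed
    finally show ?thesis by (simp add: Cf_def)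
  qed
  define h where "h = (\<lambda>s \<omega>. (U \<omega> - m) * (U' \<omega> - m) * (1 - cos ((Z \<omega> - Z' \<omega>) \<bullet> s)))"
  define \<nu>' where "\<nu>' = density \<nu> (\<lambda>s. ennreal (indicator (- {0::'a}) s))"
  have nu'_sets: "sets \<nu>' = sets borel" by (simp add: \<nu>'_def nu_sets)
  have space_nu: "space \<nu> = UNIV" using sets_eq_imp_space_eq[OF nu_sets] by simp
  have space_nu': "space \<nu>' = UNIV" using sets_eq_imp_space_eq[OF nu'_sets] by simp
  have meas_nu: "f \<in> borel_measurable \<nu>" if "f \<in> borel_measurable borel" for f :: "'a \<Rightarrow> real"
    by (subst measurable_cong_sets[OF nu_sets refl]) (rule that)
  have meas_nu_e: "f \<in> borel_measurable \<nu>" if "f \<in> borel_measurable borel" for f :: "'a \<Rightarrow> ennreal"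
    by (subst measurable_cong_sets[OF nu_sets refl]) (rule that)
  have meas_nu': "f \<in> borel_measurable \<nu>'" if "f \<in> borel_measurable borel" for f :: "'a \<Rightarrow> real"
    by (subst measurable_cong_sets[OF nu'_sets refl]) (rule that)
  have h_meas_borel: "case_prod h \<in> borel_measurable (borel \<Otimes>\<^sub>M M)" unfolding h_def by measurable
  have h_meas: "case_prod h \<in> borel_measurable (\<nu>' \<Otimes>\<^sub>M M)"
    by (subst measurable_cong_sets[OF sets_pair_measure_cong[OF nu'_sets refl] refl]) (rule h_meas_borel)
  have h_meas_nu: "case_prod h \<in> borel_measurable (\<nu> \<Otimes>\<^sub>M M)"
    by (subst measurable_cong_sets[OF sets_pair_measure_cong[OF nu_sets refl] refl]) (rule h_meas_borel)
  have nu'_int: "integral\<^sup>L \<nu>' f = integral\<^sup>L \<nu> f" if "f \<in> borel_measurable borel" "f 0 = 0" for f :: "'a \<Rightarrow> real"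
  proof -
    have "integral\<^sup>L \<nu>' f = (\<integral>s. indicator (- {0::'a}) s *\<^sub>R f s \<partial>\<nu>)"
      unfolding \<nu>'_def by (rule integral_density) (auto intro!: meas_nu that)
    also have "\<dots> = integral\<^sup>L \<nu> f"
      using that(2) by (intro Bochner_Integration.integral_cong) (auto simp: indicator_def)
    finally show ?thesis .
  qed
  have nu'_nn: "(\<integral>\<^sup>+s. ennreal (w s) \<partial>\<nu>') \<le> (\<integral>\<^sup>+s. ennreal (w s) \<partial>\<nu>)"
    if "w \<in> borel_measurable borel" for w :: "'a \<Rightarrow> real"
  proof -
    have "(\<integral>\<^sup>+s. ennreal (w s) \<partial>\<nu>') = (\<integral>\<^sup>+s. ennreal (indicator (- {0::'a}) s) * ennreal (w s) \<partial>\<nu>)"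
      unfolding \<nu>'_def using that by (intro nn_integral_density) (auto intro!: meas_nu meas_nu_e)
    also have "\<dots> \<le> (\<integral>\<^sup>+s. ennreal (w s) \<partial>\<nu>)"
      by (intro nn_integral_mono) (auto simp: indicator_def)
    finally show ?thesis .
  qed
  have nu'_em: "emeasure \<nu>' A \<le> emeasure \<nu> A" if "A \<in> sets borel" for A
  proof -
    have "emeasure \<nu>' A = (\<integral>\<^sup>+s. ennreal (indicator (- {0::'a}) s) * indicator A s \<partial>\<nu>)"
      unfolding \<nu>'_def using that nu_sets by (intro emeasure_density) (auto intro!: meas_nu_e)
    also have "\<dots> \<le> (\<integral>\<^sup>+s. indicator A s \<partial>\<nu>)"
      by (intro nn_integral_mono) (auto simp: indicator_def)
    also have "\<dots> = emeasure \<nu> A" using that nu_sets by simp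
    finally show ?thesis .
  qed
  have nu'_0: "emeasure \<nu>' {0} = 0"
  proof -
    have "emeasure \<nu>' {0} = (\<integral>\<^sup>+s. ennreal (indicator (- {0::'a}) s) * indicator {0} s \<partial>\<nu>)"
      unfolding \<nu>'_def using nu_sets by (intro emeasure_density) (auto intro!: meas_nu_e)
    also have "\<dots> = (\<integral>\<^sup>+s. 0 \<partial>\<nu>)" by (intro nn_integral_cong) (auto simp: indicator_def)
    also have "\<dots> = 0" by simp
    finally show ?thesis .
  qed
  define An where "An = (\<lambda>n::nat. {s::'a. inverse (real (Suc n)) < norm s})"
  have An_sets: "An n \<in> sets borel" for n unfolding An_def by measurable
  have An_fin: "emeasure \<nu> (An n) \<noteq> \<infinity>" for n
    using cases
  proof
    assume "finite_measure \<nu>" then show ?thesis using finite_measure.emeasure_finite[of \<nu> "An n"] by simp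
  next
    assume "\<exists>\<alpha>::real. 0 < \<alpha> \<and> \<alpha> \<le> 2 \<and>
         (\<integral>\<^sup>+ s. ennreal (min 1 (norm s powr \<alpha>)) \<partial>\<nu>) < \<infinity> \<and>
         integrable M (\<lambda>\<omega>. (U \<omega>)\<^sup>2) \<and>
         integrable M (\<lambda>\<omega>. norm (Z \<omega>) powr (2 * \<alpha>))"
    then obtain \<alpha> :: real where \<alpha>: "0 < \<alpha>" "\<alpha> \<le> 2"
      and wfin: "(\<integral>\<^sup>+ s. ennreal (min 1 (norm s powr \<alpha>)) \<partial>\<nu>) < \<infinity>" by auto
    define c where "c = real (Suc n) powr \<alpha>"
    have c1: "1 \<le> c" unfolding c_def using \<alpha> by (intro ge_one_powr_ge_zero) auto
    have pt: "indicator (An n) s \<le> c * min 1 (norm s powr \<alpha>)" for s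
    proof (cases "s \<in> An n")
      case True
      then have "inverse (real (Suc n)) < norm s" by (simp add: An_def)
      then have "inverse (real (Suc n)) powr \<alpha> \<le> norm s powr \<alpha>" using \<alpha> by (intro powr_mono2) auto
      moreover have "inverse (real (Suc n)) powr \<alpha> = inverse c" by (simp add: c_def inverse_powr)
      ultimately have "inverse c \<le> norm s powr \<alpha>" by simp
      then have "1 \<le> c * norm s powr \<alpha>" using c1 by (simp add: field_simps)
      then show ?thesis using True c1 by (simp add: min_def)
    next
      case False then show ?thesis using c1 by simp
    qed
    have "emeasure \<nu> (An n) = (\<integral>\<^sup>+ s. indicator (An n) s \<partial>\<nu>)" using An_sets nu_sets by simp
    also have "\<dots> \<le> (\<integral>\<^sup>+ s. ennreal c * ennreal (min 1 (norm s powr \<alpha>)) \<partial>\<nu>)"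
    proof (intro nn_integral_mono)
      fix s
      have "ennreal (indicator (An n) s) \<le> ennreal (c * min 1 (norm s powr \<alpha>))" by (intro ennreal_leI pt)
      then show "indicator (An n) s \<le> ennreal c * ennreal (min 1 (norm s powr \<alpha>))"
        using c1 by (simp add: ennreal_mult ennreal_indicator)
    qed
    also have "\<dots> = ennreal c * (\<integral>\<^sup>+ s. ennreal (min 1 (norm s powr \<alpha>)) \<partial>\<nu>)"
      by (rule nn_integral_cmult) (intro meas_nu_e; measurable)
    also have "\<dots> < \<infinity>" using wfin by (simp add: ennreal_mult_less_top)
    finally show ?thesis by simp
  qed
  have sf: "sigma_finite_measure \<nu>'"
  proof
    show "\<exists>A::'a set set. countable A \<and> A \<subseteq> sets \<nu>' \<and> \<Union>A = space \<nu>' \<and> (\<forall>a\<in>A. emeasure \<nu>' a \<noteq> \<infinity>)"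
    proof (intro exI conjI)
      show "countable (insert {0} (range An))" by simp
      show "insert {0} (range An) \<subseteq> sets \<nu>'" using An_sets nu'_sets by auto
      show "\<Union>(insert {0} (range An)) = space \<nu>'"
      proof -
        have "s \<in> \<Union>(insert {0} (range An))" for s :: 'a
        proof (cases "s = 0")
          case False
          then obtain n where "inverse (real (Suc n)) < norm s" using reals_Archimedean[of "norm s"] by auto
          then show ?thesis by (auto simp: An_def)
        qed simp
        then show ?thesis using space_nu' by auto
      qed
      show "\<forall>a\<in>insert {0} (range An). emeasure \<nu>' a \<noteq> \<infinity>"
      proof
        fix a assume "a \<in> insert {0} (range An)"
        then show "emeasure \<nu>' a \<noteq> \<infinity>"
        proof
          assume "a = {0}" then show ?thesis using nu'_0 by simp
        next
          assume "a \<in> range An" then obtain n where "a = An n" by auto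
          then show ?thesis using An_fin[of n] nu'_em[OF An_sets, of n] neq_top_trans by auto
        qed
      qed
    qed
  qed
  interpret PS: pair_sigma_finite \<nu>' M
    using sf P.sigma_finite_measure_axioms by (simp add: pair_sigma_finite_def)
  have PSF: "pair_sigma_finite \<nu>' M"
    using sf P.sigma_finite_measure_axioms by (simp add: pair_sigma_finite_def)
  define vv where "vv = (\<lambda>\<omega>. (U \<omega> - m) * (U' \<omega> - m))"
  have vvI: "integrable M vv" using VV(1) by (simp add: vv_def vf_def)
  have h_abs: "\<bar>h s \<omega>\<bar> = \<bar>vv \<omega>\<bar> * \<bar>1 - cos ((Z \<omega> - Z' \<omega>) \<bullet> s)\<bar>" for s \<omega>
    by (simp add: h_def vv_def abs_mult)
  have hint: "integrable (\<nu>' \<Otimes>\<^sub>M M) (case_prod h)"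
    using cases
  proof
    assume fin: "finite_measure \<nu>"
    show ?thesis
    proof (rule integrable_prod_bound[OF PSF h_meas, where w="\<lambda>s. 1" and B="\<lambda>\<omega>. 2 * \<bar>vv \<omega>\<bar>"])
      show "\<bar>case (s, \<omega>) of (s, \<omega>) \<Rightarrow> h s \<omega>\<bar> \<le> 2 * \<bar>vv \<omega>\<bar> * 1" for s \<omega>
      proof -
        have "\<bar>1 - cos ((Z \<omega> - Z' \<omega>) \<bullet> s)\<bar> \<le> 2"
          using cos_le_one[of "(Z \<omega> - Z' \<omega>) \<bullet> s"] cos_ge_minus_one[of "(Z \<omega> - Z' \<omega>) \<bullet> s"] by linarith
        then have "\<bar>vv \<omega>\<bar> * \<bar>1 - cos ((Z \<omega> - Z' \<omega>) \<bullet> s)\<bar> \<le> \<bar>vv \<omega>\<bar> * 2"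
          by (intro mult_left_mono) auto
        then show ?thesis by (simp add: h_abs)
      qed
      show "(\<lambda>s. 1::real) \<in> borel_measurable \<nu>'" by simp
      show "(\<lambda>\<omega>. 2 * \<bar>vv \<omega>\<bar>) \<in> borel_measurable M" unfolding vv_def by measurable
      have "(\<integral>\<^sup>+s. ennreal 1 \<partial>\<nu>') \<le> (\<integral>\<^sup>+s. ennreal 1 \<partial>\<nu>)" by (rule nu'_nn) simp
      also have "\<dots> < \<infinity>" using finite_measure.emeasure_finite[OF fin, of "space \<nu>"]
        by (simp add: less_top)
      finally show "(\<integral>\<^sup>+s. ennreal 1 \<partial>\<nu>') < \<infinity>" .
      show "integrable M (\<lambda>\<omega>. 2 * \<bar>vv \<omega>\<bar>)" using vvI by simp
    qed auto
  next
    assume "\<exists>\<alpha>::real. 0 < \<alpha> \<and> \<alpha> \<le> 2 \<and>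
         (\<integral>\<^sup>+ s. ennreal (min 1 (norm s powr \<alpha>)) \<partial>\<nu>) < \<infinity> \<and>
         integrable M (\<lambda>\<omega>. (U \<omega>)\<^sup>2) \<and>
         integrable M (\<lambda>\<omega>. norm (Z \<omega>) powr (2 * \<alpha>))"
    then obtain \<alpha> :: real where \<alpha>: "0 < \<alpha>" "\<alpha> \<le> 2"
      and wfin: "(\<integral>\<^sup>+ s. ennreal (min 1 (norm s powr \<alpha>)) \<partial>\<nu>) < \<infinity>"
      and Z2: "integrable M (\<lambda>\<omega>. norm (Z \<omega>) powr (2 * \<alpha>))" by auto
    define B where "B = (\<lambda>\<omega>. 2 * \<bar>vv \<omega>\<bar> * max 1 (norm (Z \<omega> - Z' \<omega>) powr \<alpha>))"
    have BI: "integrable M B"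
    proof -
      define af where "af = (\<lambda>p::real\<times>'a. \<bar>fst p - m\<bar>)"
      define ff where "ff = (\<lambda>p::real\<times>'a. \<bar>fst p - m\<bar> * norm (snd p) powr \<alpha>)"
      have af_meas[measurable]: "af \<in> borel_measurable borel"
        unfolding af_def by (intro borel_measurable_continuous_onI continuous_intros)
      have ff_meas[measurable]: "ff \<in> borel_measurable borel"
        unfolding ff_def by (subst borel_prod[symmetric]) measurable
      have afI: "integrable M (\<lambda>\<omega>. af (U \<omega>, Z \<omega>))" using VI by (simp add: af_def vf_def)
      have af'I: "integrable M (\<lambda>\<omega>. af (U' \<omega>, Z' \<omega>))" using afI distI[OF af_meas] by simp
      have V2I: "integrable M (\<lambda>\<omega>. (U \<omega> - m)\<^sup>2)"
      proof -
        have "integrable M (\<lambda>\<omega>. (U \<omega>)\<^sup>2 - 2 * m * U \<omega> + m\<^sup>2)" using U2 UI by simp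
        moreover have "(\<lambda>\<omega>. (U \<omega> - m)\<^sup>2) = (\<lambda>\<omega>. (U \<omega>)\<^sup>2 - 2 * m * U \<omega> + m\<^sup>2)"
          by (auto simp: power2_diff algebra_simps)
        ultimately show ?thesis by simp
      qed
      have ffI: "integrable M (\<lambda>\<omega>. ff (U \<omega>, Z \<omega>))"
      proof (rule Bochner_Integration.integrable_bound[of M "\<lambda>\<omega>. (U \<omega> - m)\<^sup>2 + norm (Z \<omega>) powr (2 * \<alpha>)"])
        show "integrable M (\<lambda>\<omega>. (U \<omega> - m)\<^sup>2 + norm (Z \<omega>) powr (2 * \<alpha>))" using V2I Z2 by simp
        show "(\<lambda>\<omega>. ff (U \<omega>, Z \<omega>)) \<in> borel_measurable M" by measurable
        show "AE \<omega> in M. norm (ff (U \<omega>, Z \<omega>)) \<le> norm ((U \<omega> - m)\<^sup>2 + norm (Z \<omega>) powr (2 * \<alpha>))"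
        proof (intro AE_I2)
          fix \<omega>
          define a where "a = \<bar>U \<omega> - m\<bar>"
          define x where "x = norm (Z \<omega>) powr \<alpha>"
          have x0: "0 \<le> x" "0 \<le> a" by (simp_all add: x_def a_def)
          have "norm (Z \<omega>) powr (2 * \<alpha>) = norm (Z \<omega>) powr (\<alpha> + \<alpha>)" by (simp only: mult_2)
          also have "\<dots> = x * x" unfolding x_def by (rule powr_add)
          finally have "norm (Z \<omega>) powr (2 * \<alpha>) = x * x" .
          moreover have "(U \<omega> - m)\<^sup>2 = a * a" by (simp add: a_def power2_eq_square)
          moreover have "a * x \<le> a * a + x * x"
          proof -
            have "a * x \<le> max a x * max a x" using x0 by (intro mult_mono) auto
            moreover have "max a x * max a x \<le> a * a + x * x" using x0 by (cases "a \<le> x") (auto simp: max_def)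
            ultimately show ?thesis by linarith
          qed
          ultimately show "norm (ff (U \<omega>, Z \<omega>)) \<le> norm ((U \<omega> - m)\<^sup>2 + norm (Z \<omega>) powr (2 * \<alpha>))"
            using x0 by (simp add: ff_def a_def[symmetric] x_def[symmetric] abs_mult)
        qed
      qed
      have ff'I: "integrable M (\<lambda>\<omega>. ff (U' \<omega>, Z' \<omega>))" using ffI distI[OF ff_meas] by simp
      have T1: "integrable M (\<lambda>\<omega>. af (U \<omega>, Z \<omega>) * af (U' \<omega>, Z' \<omega>))"
        using indepE[OF af_meas af_meas afI af'I] by simp
      have T2: "integrable M (\<lambda>\<omega>. ff (U \<omega>, Z \<omega>) * af (U' \<omega>, Z' \<omega>))"
        using indepE[OF ff_meas af_meas ffI af'I] by simp
      have T3: "integrable M (\<lambda>\<omega>. af (U \<omega>, Z \<omega>) * ff (U' \<omega>, Z' \<omega>))"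
        using indepE[OF af_meas ff_meas afI ff'I] by simp
      show ?thesis
      proof (rule Bochner_Integration.integrable_bound[of M "\<lambda>\<omega>. 2 * (af (U \<omega>, Z \<omega>) * af (U' \<omega>, Z' \<omega>))
            + 8 * (ff (U \<omega>, Z \<omega>) * af (U' \<omega>, Z' \<omega>)) + 8 * (af (U \<omega>, Z \<omega>) * ff (U' \<omega>, Z' \<omega>))"])
        show "integrable M (\<lambda>\<omega>. 2 * (af (U \<omega>, Z \<omega>) * af (U' \<omega>, Z' \<omega>))
            + 8 * (ff (U \<omega>, Z \<omega>) * af (U' \<omega>, Z' \<omega>)) + 8 * (af (U \<omega>, Z \<omega>) * ff (U' \<omega>, Z' \<omega>)))"
          using T1 T2 T3 by simp
        show "B \<in> borel_measurable M" unfolding B_def vv_def by measurable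
        show "AE \<omega> in M. norm (B \<omega>) \<le> norm (2 * (af (U \<omega>, Z \<omega>) * af (U' \<omega>, Z' \<omega>))
            + 8 * (ff (U \<omega>, Z \<omega>) * af (U' \<omega>, Z' \<omega>)) + 8 * (af (U \<omega>, Z \<omega>) * ff (U' \<omega>, Z' \<omega>)))"
        proof (intro AE_I2)
          fix \<omega>
          define a where "a = \<bar>U \<omega> - m\<bar>"
          define b where "b = \<bar>U' \<omega> - m\<bar>"
          define x where "x = norm (Z \<omega>) powr \<alpha>"
          define y where "y = norm (Z' \<omega>) powr \<alpha>"
          define d where "d = norm (Z \<omega> - Z' \<omega>) powr \<alpha>"
          have nn: "0 \<le> a" "0 \<le> b" "0 \<le> x" "0 \<le> y" "0 \<le> d"
            by (simp_all add: a_def b_def x_def y_def d_def)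
          have "d \<le> (norm (Z \<omega>) + norm (Z' \<omega>)) powr \<alpha>"
            unfolding d_def using \<alpha> by (intro powr_mono2 norm_triangle_ineq4) auto
          also have "\<dots> \<le> 4 * (x + y)" unfolding x_def y_def using \<alpha> by (intro powr_sum_bound) auto
          finally have d4: "d \<le> 4 * (x + y)" .
          have "max 1 d \<le> 1 + 4 * (x + y)" using d4 nn by simp
          then have "(a * b) * max 1 d \<le> (a * b) * (1 + 4 * (x + y))"
            using nn by (intro mult_left_mono) auto
          moreover have "(a * b) * (1 + 4 * (x + y)) = a * b + 4 * (x * a * b) + 4 * (a * (y * b))"
            by (simp add: algebra_simps)
          ultimately have "2 * (a * b) * max 1 d \<le> 2 * (a * b) + 8 * (x * a * b) + 8 * (a * (y * b))"
            by linarith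
          moreover have "norm (B \<omega>) = 2 * (a * b) * max 1 d"
            by (simp add: B_def vv_def a_def b_def d_def abs_mult)
          moreover have "0 \<le> 2 * (a * b) + 8 * (x * a * b) + 8 * (a * (y * b))" using nn by simp
          ultimately show "norm (B \<omega>) \<le> norm (2 * (af (U \<omega>, Z \<omega>) * af (U' \<omega>, Z' \<omega>))
            + 8 * (ff (U \<omega>, Z \<omega>) * af (U' \<omega>, Z' \<omega>)) + 8 * (af (U \<omega>, Z \<omega>) * ff (U' \<omega>, Z' \<omega>)))"
            by (simp add: af_def ff_def a_def[symmetric] b_def[symmetric] x_def[symmetric] y_def[symmetric] mult_ac)
        qed
      qed
    qed
    show ?thesis
    proof (rule integrable_prod_bound[OF PSF h_meas, where w="\<lambda>s. min 1 (norm s powr \<alpha>)" and B=B])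
      show "\<bar>case (s, \<omega>) of (s, \<omega>) \<Rightarrow> h s \<omega>\<bar> \<le> B \<omega> * min 1 (norm s powr \<alpha>)" for s \<omega>
      proof -
        have "\<bar>vv \<omega>\<bar> * \<bar>1 - cos ((Z \<omega> - Z' \<omega>) \<bullet> s)\<bar> \<le> \<bar>vv \<omega>\<bar> * (2 * max 1 (norm (Z \<omega> - Z' \<omega>) powr \<alpha>) * min 1 (norm s powr \<alpha>))"
          by (intro mult_left_mono cos_inner_bound \<alpha>) auto
        then show ?thesis by (simp add: h_abs B_def mult_ac)
      qed
      show "(\<lambda>s. min 1 (norm s powr \<alpha>)) \<in> borel_measurable \<nu>'" by (intro meas_nu') measurable
      show "B \<in> borel_measurable M" unfolding B_def vv_def by measurable
      have "(\<integral>\<^sup>+s. ennreal (min 1 (norm s powr \<alpha>)) \<partial>\<nu>') \<le> (\<integral>\<^sup>+s. ennreal (min 1 (norm s powr \<alpha>)) \<partial>\<nu>)"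
        by (rule nu'_nn) measurable
      also have "\<dots> < \<infinity>" by (rule wfin)
      finally show "(\<integral>\<^sup>+s. ennreal (min 1 (norm s powr \<alpha>)) \<partial>\<nu>') < \<infinity>" .
      show "integrable M B" by (rule BI)
      show "0 \<le> B \<omega>" for \<omega> by (simp add: B_def)
    qed auto
  qed
  have hmeas_s: "(\<lambda>s. \<integral>\<omega>. h s \<omega> \<partial>M) \<in> borel_measurable borel"
  proof -
    have "(\<lambda>s. \<integral>\<omega>. h s \<omega> \<partial>M) \<in> borel_measurable (borel::'a measure)"
      by (rule P.borel_measurable_lebesgue_integral) (use h_meas_borel in simp)
    then show ?thesis .
  qed
  have K_meas: "(\<lambda>s. 1 - cos (x \<bullet> s)) \<in> borel_measurable (borel::'a measure)" for x :: 'a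
    by (intro borel_measurable_continuous_onI continuous_intros)
  have "Tstat M U Z \<nu> = (\<integral>s. - (\<integral>\<omega>. h s \<omega> \<partial>M) \<partial>\<nu>)"
    unfolding Tstat_def m_def[symmetric] using Tpt by (simp add: h_def)
  also have "\<dots> = (\<integral>s. - (\<integral>\<omega>. h s \<omega> \<partial>M) \<partial>\<nu>')"
    by (rule nu'_int[symmetric]) (use hmeas_s in \<open>auto simp: h_def\<close>)
  also have "\<dots> = - (\<integral>s. (\<integral>\<omega>. h s \<omega> \<partial>M) \<partial>\<nu>')" by simp
  also have "(\<integral>s. (\<integral>\<omega>. h s \<omega> \<partial>M) \<partial>\<nu>') = (\<integral>\<omega>. (\<integral>s. h s \<omega> \<partial>\<nu>') \<partial>M)"
    using PS.Fubini_integral[OF hint] by simp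
  also have "\<dots> = (\<integral>\<omega>. (U \<omega> - m) * (U' \<omega> - m) * Kfun \<nu> (Z \<omega> - Z' \<omega>) \<partial>M)"
  proof (intro Bochner_Integration.integral_cong refl)
    fix \<omega>
    have "(\<integral>s. h s \<omega> \<partial>\<nu>') = (U \<omega> - m) * (U' \<omega> - m) * (\<integral>s. 1 - cos ((Z \<omega> - Z' \<omega>) \<bullet> s) \<partial>\<nu>')"
      by (simp add: h_def)
    also have "(\<integral>s. 1 - cos ((Z \<omega> - Z' \<omega>) \<bullet> s) \<partial>\<nu>') = Kfun \<nu> (Z \<omega> - Z' \<omega>)"
      unfolding Kfun_def by (rule nu'_int[OF K_meas]) simp
    finally show "(\<integral>s. h s \<omega> \<partial>\<nu>') = (U \<omega> - m) * (U' \<omega> - m) * Kfun \<nu> (Z \<omega> - Z' \<omega>)" .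
  qed
  finally show ?thesis by (simp add: m_def)
qed

end
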